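(* Let $K$ be an algebraically closed field complete with respect to a nontrivial nonarchimedean absolute value, let $a\in K^N$ and $r\in|K^*|$, and let $\mathcal{A}$ be a family of analytic functions on $\bar B(a,r)$. Assume there is a constant $C>0$ with $|\Psi(x)|\le C$ for all $x\in\bar B(a,r)$ and all $\Psi\in\mathcal{A}$. Then for all $x,y\in\bar B(a,r)$ and all $\Psi,\Lambda\in\mathcal{A}$, $$|\Psi(x)\Lambda(y)-\Psi(y)\Lambda(x)|\le\frac{C^2}{r}\|x-y\|.$$
   Context: For $x\in K^N$, $\|x\|=\max_i|x_i|$, and $\bar B(a,r)=\{x\in K^N:\|x-a\|\le r\}$. A formal power series $\Psi(x)=\sum_{i_1,\dots,i_N\ge0}c_{i_1\cdots i_N}(x_1-a_1)^{i_1}\cdots(x_N-a_N)^{i_N}$ with $c_{i_1\cdots i_N}\in K$ is analytic on $\bar B(a,r)$ if $|c_{i_1\cdots i_N}|\,r^{i_1+\cdots+i_N}\to0$ as $i_1+\cdots+i_N\to\infty$; it then defines a function $\Psi:\bar B(a,r)\to K$. *)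

theory Defs
  imports "HOL-Computational_Algebra.Polynomial"
begin

definition nonarch_abs :: "('a::field \<Rightarrow> real) \<Rightarrow> bool" where
  "nonarch_abs v \<longleftrightarrow>
     (\<forall>x. v x \<ge> 0) \<and> (\<forall>x. v x = 0 \<longleftrightarrow> x = 0) \<and>
     (\<forall>x y. v (x * y) = v x * v y) \<and>
     (\<forall>x y. v (x + y) \<le> max (v x) (v y))"

definition nontrivial_abs :: "('a::field \<Rightarrow> real) \<Rightarrow> bool" where
  "nontrivial_abs v \<longleftrightarrow> (\<exists>x. x \<noteq> 0 \<and> v x \<noteq> 1)"

definition v_converges_to :: "('a::field \<Rightarrow> real) \<Rightarrow> (nat \<Rightarrow> 'a) \<Rightarrow> 'a \<Rightarrow> bool" where
  "v_converges_to v s l \<longleftrightarrow> (\<forall>\<epsilon>>0. \<exists>M0. \<forall>M\<ge>M0. v (s M - l) < \<epsilon>)"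

definition v_complete :: "('a::field \<Rightarrow> real) \<Rightarrow> bool" where
  "v_complete v \<longleftrightarrow>
     (\<forall>s. (\<forall>\<epsilon>>0. \<exists>M0. \<forall>m\<ge>M0. \<forall>n\<ge>M0. v (s m - s n) < \<epsilon>)
          \<longrightarrow> (\<exists>l. v_converges_to v s l))"

definition alg_closed_field :: "'a::field itself \<Rightarrow> bool" where
  "alg_closed_field _ \<longleftrightarrow> (\<forall>p::'a poly. degree p > 0 \<longrightarrow> (\<exists>x. poly p x = 0))"

definition vnorm :: "('a::field \<Rightarrow> real) \<Rightarrow> ('n::finite \<Rightarrow> 'a) \<Rightarrow> real" where
  "vnorm v x = Max (range (\<lambda>i. v (x i)))"

definition cball_v :: "('a::field \<Rightarrow> real) \<Rightarrow> ('n::finite \<Rightarrow> 'a) \<Rightarrow> real \<Rightarrow> ('n \<Rightarrow> 'a) set" where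
  "cball_v v a r = {x. vnorm v (x - a) \<le> r}"

definition mdeg :: "('n::finite \<Rightarrow> nat) \<Rightarrow> nat" where
  "mdeg I = (\<Sum>i\<in>UNIV. I i)"

definition analytic_coeffs :: "('a::field \<Rightarrow> real) \<Rightarrow> real \<Rightarrow> (('n::finite \<Rightarrow> nat) \<Rightarrow> 'a) \<Rightarrow> bool" where
  "analytic_coeffs v r c \<longleftrightarrow>
     (\<forall>\<epsilon>>0. \<exists>M. \<forall>I. mdeg I \<ge> M \<longrightarrow> v (c I) * r ^ mdeg I < \<epsilon>)"

definition ps_partial :: "(('n::finite \<Rightarrow> nat) \<Rightarrow> 'a::field) \<Rightarrow> ('n \<Rightarrow> 'a) \<Rightarrow> ('n \<Rightarrow> 'a) \<Rightarrow> nat \<Rightarrow> 'a" where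
  "ps_partial c a x M = (\<Sum>I\<in>{I. mdeg I \<le> M}. c I * (\<Prod>i\<in>UNIV. (x i - a i) ^ I i))"

definition analytic_on_cball :: "('a::field \<Rightarrow> real) \<Rightarrow> ('n::finite \<Rightarrow> 'a) \<Rightarrow> real \<Rightarrow> (('n \<Rightarrow> 'a) \<Rightarrow> 'a) \<Rightarrow> bool" where
  "analytic_on_cball v a r f \<longleftrightarrow>
     (\<exists>c. analytic_coeffs v r c \<and>
          (\<forall>x\<in>cball_v v a r. v_converges_to v (ps_partial c a x) (f x)))"

end

theory Submission
  imports Defs "HOL-Library.FuncSet"
begin

context fixes v :: "'a::field \<Rightarrow> real" assumes na: "nonarch_abs v"
begin
lemma v_nonneg: "0 \<le> v x" using na unfolding nonarch_abs_def by auto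
lemma v_zero_iff: "v x = 0 \<longleftrightarrow> x = 0" using na unfolding nonarch_abs_def by auto
lemma v_mult: "v (x * y) = v x * v y" using na unfolding nonarch_abs_def by auto
lemma v_add: "v (x + y) \<le> max (v x) (v y)" using na unfolding nonarch_abs_def by auto
lemma v_0: "v 0 = 0" using v_zero_iff by simp
lemma v_1: "v 1 = 1"
proof -
  have "v 1 = v 1 * v 1" using v_mult[of 1 1] by simp
  moreover have "v 1 \<noteq> 0" using v_zero_iff by simp
  ultimately show ?thesis by simp
qed
lemma v_m1: "v (-1) = 1"
proof -
  have "v (-1) * v (-1) = 1" using v_mult[of "-1" "-1"] v_1 by simp
  then have "(v (-1) - 1) * (v (-1) + 1) = 0" by (simp add: algebra_simps)
  with v_nonneg[of "-1"] show ?thesis by auto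
qed
lemma v_uminus: "v (- x) = v x" using v_mult[of "-1" x] v_m1 by simp
lemma v_diff: "v (x - y) \<le> max (v x) (v y)" using v_add[of x "-y"] v_uminus[of y] by simp
lemma v_commute: "v (x - y) = v (y - x)" using v_uminus[of "x - y"] by simp
lemma v_power: "v (x ^ n) = v x ^ n" by (induction n) (simp_all add: v_1 v_mult)
lemma v_prod: "v (prod f S) = (\<Prod>i\<in>S. v (f i))"
  by (induction S rule: infinite_finite_induct) (simp_all add: v_1 v_mult)
lemma v_sum_le: "finite S \<Longrightarrow> 0 \<le> B \<Longrightarrow> (\<And>i. i \<in> S \<Longrightarrow> v (f i) \<le> B) \<Longrightarrow> v (sum f S) \<le> B"
proof (induction S rule: finite_induct)
  case empty then show ?case by (simp add: v_0)
next
  case (insert x F)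
  then have "v (f x) \<le> B" "v (sum f F) \<le> B" by simp_all
  then show ?case using insert(1,2) v_add[of "f x" "sum f F"] by simp
qed
lemma v_strict: assumes "v y < v x" shows "v (x - y) = v x"
proof -
  have "v (x - y) \<le> v x" using v_diff[of x y] assms by simp
  moreover have "v x \<le> max (v (x - y)) (v y)" using v_add[of "x - y" y] by simp
  ultimately show ?thesis using assms by linarith
qed
lemma v_inverse: "x \<noteq> 0 \<Longrightarrow> v (inverse x) = 1 / v x"
  using v_mult[of x "inverse x"] v_1 v_zero_iff[of x] by (simp add: field_simps)
lemma v_divide: "y \<noteq> 0 \<Longrightarrow> v (x / y) = v x / v y"
  using v_mult[of x "inverse y"] v_inverse[of y] by (simp add: divide_inverse)
lemma v_add3: "v (x + y + z) \<le> max (v x) (max (v y) (v z))"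
  using v_add[of "x+y" z] v_add[of x y] by simp

lemma far:
  assumes ac: "alg_closed_field TYPE('a)" and T: "finite T" and T1: "\<forall>t\<in>T. v t \<le> 1"
  shows "\<exists>s. v s \<le> 1 \<and> (\<forall>t\<in>T. 1 \<le> v (s - t))"
proof (cases "T = {}")
  case True then show ?thesis by (intro exI[of _ 0]) (simp add: v_0)
next
  case False
  define q :: "'a poly" where "q = (\<Prod>t\<in>T. [:-t, 1:])"
  have dq: "degree q = card T" unfolding q_def
    by (subst degree_prod_eq_sum_degree) auto
  have "degree (q - 1) = degree q"
    using degree_add_eq_left[of "-1" q] dq False T by (simp add: card_gt_0_iff)
  then have "degree (q - 1) > 0" using dq False T by (simp add: card_gt_0_iff)
  then obtain s where "poly (q - 1) s = 0" using ac unfolding alg_closed_field_def by blast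
  then have P: "(\<Prod>t\<in>T. (s - t)) = 1" unfolding q_def by (simp add: poly_prod)
  then have PV: "(\<Prod>t\<in>T. v (s - t)) = 1" using v_prod[of "\<lambda>t. s - t" T] v_1 by simp
  have s1: "v s \<le> 1"
  proof (rule ccontr)
    assume "\<not> v s \<le> 1"
    then have "\<forall>t\<in>T. v (s - t) = v s" using T1 v_strict by force
    then have "(\<Prod>t\<in>T. v (s - t)) = v s ^ card T" by simp
    moreover have "v s ^ card T > 1" using \<open>\<not> v s \<le> 1\<close> False T
      by (intro one_less_power) (auto simp: card_gt_0_iff)
    ultimately show False using PV by simp
  qed
  have le1: "\<forall>t\<in>T. v (s - t) \<le> 1" using v_diff s1 T1 by (meson max.bounded_iff order_trans)
  have "1 \<le> v (s - t)" if "t \<in> T" for t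
  proof -
    have "(\<Prod>t\<in>T. v (s - t)) = v (s - t) * (\<Prod>t\<in>T - {t}. v (s - t))"
      using that T by (simp add: prod.remove)
    moreover have "(\<Prod>t\<in>T - {t}. v (s - t)) \<le> 1" using le1 by (intro prod_le_1) (auto simp: v_nonneg)
    ultimately show ?thesis using PV v_nonneg[of "s - t"] by (metis mult_left_le mult.commute)
  qed
  then show ?thesis using s1 by blast
qed

lemma coeff_bound:
  assumes ac: "alg_closed_field TYPE('a)" and C: "0 \<le> C"
  shows "finite T \<Longrightarrow> (\<forall>t\<in>T. v t \<le> 1) \<Longrightarrow>
    (\<forall>s. v s \<le> 1 \<longrightarrow> (\<forall>t\<in>T. 1 \<le> v (s - t)) \<longrightarrow> v (poly p s) \<le> C) \<Longrightarrow> v (coeff p k) \<le> C"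
proof (induction "degree p" arbitrary: p T k rule: less_induct)
  case less
  obtain s0 where s0: "v s0 \<le> 1" "\<forall>t\<in>T. 1 \<le> v (s0 - t)" using far[OF ac less(2,3)] by blast
  have ps0: "v (poly p s0) \<le> C" using less(4) s0 by blast
  show ?case
  proof (cases "degree p = 0")
    case True
    then obtain a where pa: "p = pCons a 0" by (rule degree_eq_zeroE)
    show ?thesis using ps0 C by (cases k) (simp_all add: pa v_0)
  next
    case False
    define q where "q = synthetic_div p s0"
    have pq: "p = [:-s0, 1:] * q + [:poly p s0:]" unfolding q_def by (rule synthetic_div_correct'[symmetric])
    have dq: "degree q < degree p" unfolding q_def using False by (simp add: degree_synthetic_div)
    have qb: "v (poly q s) \<le> C" if "v s \<le> 1" "\<forall>t\<in>insert s0 T. 1 \<le> v (s - t)" for s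
    proof -
      have "poly ([:-s0, 1:] * q + [:poly p s0:]) s - poly p s0 = (s - s0) * poly q s"
        by (simp add: algebra_simps)
      then have "poly p s - poly p s0 = (s - s0) * poly q s"
        unfolding q_def synthetic_div_correct' .
      moreover have "v (poly p s - poly p s0) \<le> C"
      proof -
        have "v (poly p s) \<le> C" using less(4) that by simp
        then show ?thesis using v_diff[of "poly p s" "poly p s0"] ps0 by simp
      qed
      ultimately have "v (s - s0) * v (poly q s) \<le> C" by (simp add: v_mult)
      moreover have "1 \<le> v (s - s0)" using that by simp
      moreover have "1 * v (poly q s) \<le> v (s - s0) * v (poly q s)"
        by (rule mult_right_mono) (simp_all add: v_nonneg \<open>1 \<le> v (s - s0)\<close>)
      ultimately show ?thesis by simp
    qed
    have cq: "v (coeff q j) \<le> C" for j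
    proof (rule less(1)[OF dq])
      show "finite (insert s0 T)" using less(2) by simp
      show "\<forall>t\<in>insert s0 T. v t \<le> 1" using less(3) s0 by simp
      show "\<forall>s. v s \<le> 1 \<longrightarrow> (\<forall>t\<in>insert s0 T. 1 \<le> v (s - t)) \<longrightarrow> v (poly q s) \<le> C"
        using qb by blast
    qed
    have sq: "v (- s0 * coeff q j) \<le> C" for j
    proof -
      have "v (- s0 * coeff q j) = v s0 * v (coeff q j)" by (simp add: v_mult v_uminus)
      also have "\<dots> \<le> 1 * C" using s0(1) cq[of j] by (intro mult_mono) (simp_all add: v_nonneg C)
      finally show ?thesis by simp
    qed
    show ?thesis
    proof (cases k)
      case 0
      have "coeff ([:-s0, 1:] * q + [:poly p s0:]) 0 = - s0 * coeff q 0 + poly p s0" by simp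
      then have "coeff p 0 = - s0 * coeff q 0 + poly p s0" unfolding q_def synthetic_div_correct' .
      then show ?thesis using 0 v_add[of "- s0 * coeff q 0" "poly p s0"] sq[of 0] ps0 by simp
    next
      case (Suc j)
      have "coeff ([:-s0, 1:] * q + [:poly p s0:]) k = - s0 * coeff q k + coeff q j" using Suc by simp
      then have "coeff p k = - s0 * coeff q k + coeff q j" unfolding q_def synthetic_div_correct' .
      then show ?thesis using v_add[of "- s0 * coeff q k" "coeff q j"] sq[of k] cq[of j] by simp
    qed
  qed
qed

lemma vnorm_ge: "v (x i) \<le> vnorm v x"
  unfolding vnorm_def by (rule Max_ge) auto
lemma vnorm_le_iff: "vnorm v x \<le> B \<longleftrightarrow> (\<forall>i. v (x i) \<le> B)"
  unfolding vnorm_def by (subst Max_le_iff) auto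
lemma vnorm_attained: "\<exists>i. vnorm v x = v (x i)"
proof -
  have "vnorm v x \<in> range (\<lambda>i. v (x i))" unfolding vnorm_def by (rule Max_in) auto
  then show ?thesis by auto
qed
lemma in_cball: "z \<in> cball_v v a r \<longleftrightarrow> (\<forall>i. v (z i - a i) \<le> r)"
  unfolding cball_v_def by (simp add: vnorm_le_iff)

lemma finite_mdeg: "finite {I :: 'n::finite \<Rightarrow> nat. mdeg I \<le> M}"
proof -
  have "{I :: 'n \<Rightarrow> nat. mdeg I \<le> M} \<subseteq> Pi\<^sub>E UNIV (\<lambda>_. {..M})"
  proof
    fix I :: "'n \<Rightarrow> nat" assume "I \<in> {I. mdeg I \<le> M}"
    then have "I i \<le> M" for i unfolding mdeg_def
      using member_le_sum[of i UNIV I] by simp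
    then show "I \<in> Pi\<^sub>E UNIV (\<lambda>_. {..M})" by (simp add: PiE_UNIV_domain)
  qed
  moreover have "finite (Pi\<^sub>E (UNIV :: 'n set) (\<lambda>_. {..M}))" by (rule finite_PiE) auto
  ultimately show ?thesis by (rule finite_subset)
qed

lemma term_bound:
  fixes z a :: "'n::finite \<Rightarrow> 'a"
  assumes "\<forall>i. v (z i - a i) \<le> r"
  shows "v (c * (\<Prod>i\<in>UNIV. (z i - a i) ^ I i)) \<le> v c * r ^ mdeg I"
proof -
  have "v (\<Prod>i\<in>UNIV. (z i - a i) ^ I i) = (\<Prod>i\<in>UNIV. v (z i - a i) ^ I i)"
    by (simp add: v_prod v_power)
  also have "\<dots> \<le> (\<Prod>i\<in>UNIV. r ^ I i)"
    by (intro prod_mono conjI power_mono) (simp_all add: v_nonneg assms)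
  also have "\<dots> = r ^ mdeg I" unfolding mdeg_def by (simp add: power_sum)
  finally show ?thesis by (simp add: v_mult mult_left_mono v_nonneg)
qed

lemma trunc:
  fixes z a :: "'n::finite \<Rightarrow> 'a"
  assumes z: "\<forall>i. v (z i - a i) \<le> r" and conv: "v_converges_to v (ps_partial c a z) f"
    and e: "0 \<le> e" and tail: "\<forall>I. M < mdeg I \<longrightarrow> v (c I) * r ^ mdeg I \<le> e"
  shows "v (f - ps_partial c a z M) \<le> e"
proof -
  have D: "v (ps_partial c a z M' - ps_partial c a z M) \<le> e" if "M \<le> M'" for M'
  proof -
    have sub: "{I. mdeg I \<le> M} \<subseteq> {I :: 'n \<Rightarrow> nat. mdeg I \<le> M'}" using that by auto
    have "ps_partial c a z M' - ps_partial c a z M =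
        (\<Sum>I\<in>{I. mdeg I \<le> M'} - {I. mdeg I \<le> M}. c I * (\<Prod>i\<in>UNIV. (z i - a i) ^ I i))"
      unfolding ps_partial_def by (rule sum_diff[OF finite_mdeg sub, symmetric])
    also have "v \<dots> \<le> e"
    proof (rule v_sum_le)
      show "finite ({I. mdeg I \<le> M'} - {I. mdeg I \<le> M})" by (rule finite_Diff[OF finite_mdeg])
      fix I assume "I \<in> {I. mdeg I \<le> M'} - {I :: 'n \<Rightarrow> nat. mdeg I \<le> M}"
      then have "M < mdeg I" by simp
      then show "v (c I * (\<Prod>i\<in>UNIV. (z i - a i) ^ I i)) \<le> e"
        using term_bound[OF z, of "c I" I] tail by force
    qed (rule e)
    finally show ?thesis .
  qed
  show ?thesis
  proof (rule field_le_epsilon)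
    fix h :: real assume h: "0 < h"
    then obtain M0 where M0: "\<forall>M'\<ge>M0. v (ps_partial c a z M' - f) < h"
      using conv unfolding v_converges_to_def by blast
    define M' where "M' = max M0 M"
    have 1: "v (f - ps_partial c a z M') < h" using M0 v_commute unfolding M'_def by force
    have 2: "v (ps_partial c a z M' - ps_partial c a z M) \<le> e" using D unfolding M'_def by simp
    have "f - ps_partial c a z M = (f - ps_partial c a z M') + (ps_partial c a z M' - ps_partial c a z M)"
      by simp
    then have "v (f - ps_partial c a z M) \<le> max (v (f - ps_partial c a z M')) (v (ps_partial c a z M' - ps_partial c a z M))"
      using v_add by metis
    then show "v (f - ps_partial c a z M) \<le> e + h" using 1 2 e h by linarith
  qed
qed

lemma lip:
  fixes a x y :: "'n::finite \<Rightarrow> 'a" and \<Psi> :: "('n \<Rightarrow> 'a) \<Rightarrow> 'a"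
  assumes ac: "alg_closed_field TYPE('a)" and t: "t \<noteq> 0" "v t = r" and C: "C > 0"
    and an: "analytic_on_cball v a r \<Psi>" and bd: "\<forall>z\<in>cball_v v a r. v (\<Psi> z) \<le> C"
    and x: "x \<in> cball_v v a r" and y: "y \<in> cball_v v a r"
  shows "v (\<Psi> x - \<Psi> y) \<le> C / r * vnorm v (x - y)"
proof -
  obtain c where acf: "analytic_coeffs v r c"
    and conv: "\<forall>z\<in>cball_v v a r. v_converges_to v (ps_partial c a z) (\<Psi> z)"
    using an unfolding analytic_on_cball_def by blast
  have r: "r > 0" using t v_nonneg[of t] v_zero_iff[of t] by simp
  define \<delta> where "\<delta> = vnorm v (x - y)"
  obtain i0 where i0: "\<delta> = v (x i0 - y i0)" using vnorm_attained[of "x - y"] unfolding \<delta>_def by auto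
  have xb: "\<forall>i. v (x i - a i) \<le> r" and yb: "\<forall>i. v (y i - a i) \<le> r" using x y in_cball by auto
  have dxy: "v (y j - x j) \<le> \<delta>" for j using vnorm_ge[of "x - y" j] v_commute unfolding \<delta>_def by simp
  show ?thesis
  proof (cases "\<delta> = 0")
    case True
    then have "x j = y j" for j using dxy[of j] v_nonneg[of "y j - x j"] v_zero_iff[of "y j - x j"] by simp
    then have "x = y" by auto
    then show ?thesis using True r unfolding \<delta>_def by (simp add: v_0)
  next
    case False
    then have dpos: "\<delta> > 0" using v_nonneg i0 by (metis order_le_less)
    have dr: "\<delta> \<le> r"
    proof -
      have "x i0 - y i0 = (x i0 - a i0) - (y i0 - a i0)" by simp
      then have "\<delta> \<le> max (v (x i0 - a i0)) (v (y i0 - a i0))" using i0 v_diff by metis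
      then show ?thesis using xb yb by (metis max.bounded_iff order_trans)
    qed
    define e where "e = C * \<delta> / r"
    have epos: "e > 0" unfolding e_def using C dpos r by simp
    have eC: "e \<le> C" unfolding e_def using C dpos r dr by (simp add: field_simps)
    obtain M where M: "\<forall>I. mdeg I \<ge> M \<longrightarrow> v (c I) * r ^ mdeg I < e"
      using acf epos unfolding analytic_coeffs_def by blast
    have tail: "\<forall>I. M < mdeg I \<longrightarrow> v (c I) * r ^ mdeg I \<le> e" using M by (meson less_imp_le order_less_imp_le)
    define P where "P z = ps_partial c a z M" for z
    have PT: "v (\<Psi> z - P z) \<le> e" if "z \<in> cball_v v a r" for z
    proof -
      have "\<forall>i. v (z i - a i) \<le> r" using that in_cball by blast
      moreover have "v_converges_to v (ps_partial c a z) (\<Psi> z)" using conv that by blast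
      ultimately show ?thesis unfolding P_def using trunc[of z a r c "\<Psi> z" e M] epos tail by simp
    qed
    have PB: "v (P z) \<le> C" if "z \<in> cball_v v a r" for z
    proof -
      have "P z = \<Psi> z - (\<Psi> z - P z)" by simp
      then have "v (P z) \<le> max (v (\<Psi> z)) (v (\<Psi> z - P z))" using v_diff by metis
      then show ?thesis using PT[OF that] bd that eC by (metis max.bounded_iff order_trans)
    qed
    define d where "d = y i0 - x i0"
    have dnz: "d \<noteq> 0" using False i0 v_zero_iff v_commute unfolding d_def by metis
    have vd: "v d = \<delta>" using i0 v_commute unfolding d_def by simp
    define \<mu> where "\<mu> = t / d"
    have vmu: "v \<mu> = r / \<delta>" unfolding \<mu>_def using v_divide[OF dnz] t vd by simp
    have munz: "\<mu> \<noteq> 0" unfolding \<mu>_def using t dnz by simp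
    define z where "z s = (\<lambda>j. x j + s * \<mu> * (y j - x j))" for s
    have zb: "z s \<in> cball_v v a r" if "v s \<le> 1" for s
      unfolding in_cball
    proof
      fix j
      have "z s j - a j = (x j - a j) + s * \<mu> * (y j - x j)" unfolding z_def by simp
      then have "v (z s j - a j) \<le> max (v (x j - a j)) (v (s * \<mu> * (y j - x j)))" using v_add by metis
      moreover have "v (s * \<mu> * (y j - x j)) \<le> r"
      proof -
        have "v (s * \<mu> * (y j - x j)) = v s * (r / \<delta>) * v (y j - x j)" by (simp add: v_mult vmu)
        also have "\<dots> \<le> 1 * (r / \<delta>) * \<delta>"
          by (intro mult_mono) (simp_all add: that dxy v_nonneg r dpos less_imp_le)
        also have "\<dots> = r" using dpos by simp
        finally show ?thesis .
      qed
      ultimately show "v (z s j - a j) \<le> r" using xb by (metis max.bounded_iff order_trans)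
    qed
    define h where "h = (\<Sum>I\<in>{I. mdeg I \<le> M}. smult (c I) (\<Prod>j\<in>UNIV. [:x j - a j, \<mu> * (y j - x j):] ^ (I j)))"
    have ph: "poly h s = P (z s)" for s
      unfolding h_def P_def ps_partial_def z_def
      by (simp add: poly_sum poly_prod algebra_simps)
    have ch: "v (coeff h k) \<le> C" for k
      using coeff_bound[OF ac, of C "{}" h k] C ph PB zb by auto
    define s1 where "s1 = inverse \<mu>"
    have zs1: "z s1 = y" unfolding z_def s1_def using munz by (auto simp: fun_eq_iff)
    have z0: "z 0 = x" unfolding z_def by auto
    have vs1: "v s1 = \<delta> / r" unfolding s1_def using v_inverse[OF munz] vmu by simp
    have s1le: "\<delta> / r \<le> 1" using dr r by simp
    have "poly h s1 - poly h 0 = (\<Sum>i\<le>degree h. coeff h i * (s1 ^ i - 0 ^ i))"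
      by (simp add: poly_altdef sum_subtractf right_diff_distrib)
    also have "v \<dots> \<le> e"
    proof (rule v_sum_le)
      fix i assume "i \<in> {..degree h}"
      show "v (coeff h i * (s1 ^ i - 0 ^ i)) \<le> e"
      proof (cases i)
        case 0 then show ?thesis using epos by (simp add: v_0)
      next
        case (Suc j)
        have "v (coeff h i * (s1 ^ i - 0 ^ i)) = v (coeff h i) * (\<delta> / r) ^ i"
          using Suc by (simp add: v_mult v_power vs1)
        also have "\<dots> \<le> C * (\<delta> / r)"
        proof (rule mult_mono)
          have q0: "0 \<le> \<delta> / r" using dpos r by simp
          have "(\<delta> / r) ^ j \<le> 1" using q0 s1le by (rule power_le_one)
          then have "\<delta> / r * (\<delta> / r) ^ j \<le> \<delta> / r" using q0 by (rule mult_left_le)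
          then show "(\<delta> / r) ^ i \<le> \<delta> / r" using Suc by simp
        qed (simp_all add: ch v_nonneg dpos r less_imp_le C less_imp_le)
        finally show ?thesis unfolding e_def by simp
      qed
    qed (simp_all add: less_imp_le epos)
    finally have PP: "v (P y - P x) \<le> e" using ph zs1 z0 by metis
    have "\<Psi> x - \<Psi> y = (\<Psi> x - P x) + (- (P y - P x)) + (- (\<Psi> y - P y))" by simp
    then have "v (\<Psi> x - \<Psi> y) \<le> max (v (\<Psi> x - P x)) (max (v (P y - P x)) (v (\<Psi> y - P y)))"
      using v_add3 v_uminus by metis
    then have "v (\<Psi> x - \<Psi> y) \<le> e" using PT[OF x] PT[OF y] PP by simp
    then show ?thesis unfolding e_def \<delta>_def by simp
  qed
qed
end
theorem lemma22:
  fixes v :: "'a::field \<Rightarrow> real"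
    and a :: "'n::finite \<Rightarrow> 'a"
    and r C :: real
    and \<A> :: "(('n \<Rightarrow> 'a) \<Rightarrow> 'a) set"
  assumes "nonarch_abs v" and "nontrivial_abs v" and "v_complete v"
    and "alg_closed_field TYPE('a)"
    and "\<exists>t. t \<noteq> 0 \<and> v t = r"
    and "\<forall>\<Psi>\<in>\<A>. analytic_on_cball v a r \<Psi>"
    and "C > 0"
    and "\<forall>\<Psi>\<in>\<A>. \<forall>x\<in>cball_v v a r. v (\<Psi> x) \<le> C"
  shows "\<forall>x\<in>cball_v v a r. \<forall>y\<in>cball_v v a r. \<forall>\<Psi>\<in>\<A>. \<forall>\<Lambda>\<in>\<A>.
           v (\<Psi> x * \<Lambda> y - \<Psi> y * \<Lambda> x) \<le> C\<^sup>2 / r * vnorm v (x - y)"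
proof (intro ballI)
  fix x y \<Psi> \<Lambda>
  assume x: "x \<in> cball_v v a r" and y: "y \<in> cball_v v a r" and P: "\<Psi> \<in> \<A>" and L: "\<Lambda> \<in> \<A>"
  note na = assms(1)
  obtain t where t: "t \<noteq> 0" "v t = r" using assms(5) by blast
  define B where "B = C / r * vnorm v (x - y)"
  have lP: "v (\<Psi> x - \<Psi> y) \<le> B" unfolding B_def
    using lip[OF na assms(4) t assms(7) _ _ x y] assms(6,8) P by blast
  have lL: "v (\<Lambda> y - \<Lambda> x) \<le> B" unfolding B_def
    using lip[OF na assms(4) t assms(7) _ _ x y] assms(6,8) L v_commute[OF na] by metis
  have Px: "v (\<Psi> x) \<le> C" and Lx: "v (\<Lambda> x) \<le> C" using assms(8) P L x by auto
  have "\<Psi> x * \<Lambda> y - \<Psi> y * \<Lambda> x = \<Psi> x * (\<Lambda> y - \<Lambda> x) + \<Lambda> x * (\<Psi> x - \<Psi> y)"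
    by (simp add: algebra_simps)
  then have "v (\<Psi> x * \<Lambda> y - \<Psi> y * \<Lambda> x) \<le> max (v (\<Psi> x) * v (\<Lambda> y - \<Lambda> x)) (v (\<Lambda> x) * v (\<Psi> x - \<Psi> y))"
    using v_add[OF na] v_mult[OF na] by metis
  moreover have "v (\<Psi> x) * v (\<Lambda> y - \<Lambda> x) \<le> C * B"
    using Px lL by (intro mult_mono) (simp_all add: v_nonneg[OF na] less_imp_le assms(7))
  moreover have "v (\<Lambda> x) * v (\<Psi> x - \<Psi> y) \<le> C * B"
    using Lx lP by (intro mult_mono) (simp_all add: v_nonneg[OF na] less_imp_le assms(7))
  moreover have "C * B = C\<^sup>2 / r * vnorm v (x - y)" unfolding B_def by (simp add: power2_eq_square)
  ultimately show "v (\<Psi> x * \<Lambda> y - \<Psi> y * \<Lambda> x) \<le> C\<^sup>2 / r * vnorm v (x - y)" by simp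
qed

end
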